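(* For every topological space $X$, the games $G_1(\mathcal{C}_\mathcal{O},\mathcal{C}_\mathcal{O})$ and $G_1(\mathcal{C}_X, \neg \mathcal{C}_\mathcal{O})$ are dual; that is: (i) Alice has a winning strategy in $G_1(\mathcal{C}_\mathcal{O},\mathcal{C}_\mathcal{O})$ iff Bob has a winning strategy in $G_1(\mathcal{C}_X, \neg \mathcal{C}_\mathcal{O})$, and Alice has a winning strategy in $G_1(\mathcal{C}_X, \neg \mathcal{C}_\mathcal{O})$ iff Bob has a winning strategy in $G_1(\mathcal{C}_\mathcal{O},\mathcal{C}_\mathcal{O})$; (ii) Alice has a winning predetermined strategy in $G_1(\mathcal{C}_\mathcal{O},\mathcal{C}_\mathcal{O})$ iff Bob has a winning Markov strategy in $G_1(\mathcal{C}_X, \neg \mathcal{C}_\mathcal{O})$, and Alice has a winning predetermined strategy in $G_1(\mathcal{C}_X, \neg \mathcal{C}_\mathcal{O})$ iff Bob has a winning Markov strategy in $G_1(\mathcal{C}_\mathcal{O},\mathcal{C}_\mathcal{O})$.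
   Context: $\mathcal{C}_\mathcal{O}$ is the collection of all covers of $X$ by clopen sets. For $x\in X$, $\mathcal{C}_{\mathcal{T}_{X,x}}$ is the set of nonempty clopen subsets of $X$ containing $x$, and $\mathcal{C}_X=\{\mathcal{C}_{\mathcal{T}_{X,x}}:x\in X\}$. For families $\mathcal{A},\mathcal{B}$, the game $G_1(\mathcal{A},\mathcal{B})$: in each inning $n\in\omega$ Alice chooses $A_n\in\mathcal{A}$ and Bob chooses $B_n\in A_n$; Bob wins if $\{B_n:n\in\omega\}\in\mathcal{B}$, Alice otherwise. $G_1(\mathcal{A},\neg\mathcal{B})$ denotes $G_1(\mathcal{A},\mathcal{P}(\bigcup\mathcal{A})\setminus\mathcal{B})$. A strategy for Alice is a function $\sigma$ from finite sequences of elements of $\bigcup\mathcal{A}$ to $\mathcal{A}$; it is winning if whenever $x_n\in\sigma(\langle x_i:i<n\rangle)$ for all $n$, $\{x_n:n\in\omega\}\notin\mathcal{B}$. A strategy for Bob is a function $\tau$ from finite sequences $\langle A_0,\dots,A_n\rangle$ of elements of $\mathcal{A}$ to $\bigcup\mathcal{A}$ with $\tau(A_0,\dots,A_n)\in A_n$; it is winning if for all such sequences $\{\tau(A_0,\dots,A_n):n\in\omega\}\in\mathcal{B}$. A predetermined strategy for Alice is a function $\sigma:\omega\to\mathcal{A}$ (her move at inning $n$ is $\sigma(n)$). A Markov strategy for Bob is a function $\tau:\mathcal{A}\times\omega\to\bigcup\mathcal{A}$ with $\tau(A,n)\in A$ (his move at inning $n$ is $\tau(A_n,n)$). *)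

theory Defs
  imports "HOL-Analysis.Analysis"
begin

text \<open>Moves of Alice are elements of A; Bob picks an element of Alice's move.
  Finite sequences are lists (oldest first).\<close>

definition neg_game :: "'b set set \<Rightarrow> 'b set set \<Rightarrow> 'b set set" where
  "neg_game \<A> \<B> = Pow (\<Union>\<A>) - \<B>"

definition alice_strategy :: "'b set set \<Rightarrow> ('b list \<Rightarrow> 'b set) \<Rightarrow> bool" where
  "alice_strategy \<A> \<sigma> \<longleftrightarrow> (\<forall>s. set s \<subseteq> \<Union>\<A> \<longrightarrow> \<sigma> s \<in> \<A>)"

definition alice_wins_with :: "'b set set \<Rightarrow> 'b set set \<Rightarrow> ('b list \<Rightarrow> 'b set) \<Rightarrow> bool" where
  "alice_wins_with \<A> \<B> \<sigma> \<longleftrightarrow> alice_strategy \<A> \<sigma> \<and>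
     (\<forall>x :: nat \<Rightarrow> 'b. (\<forall>n. x n \<in> \<sigma> (map x [0..<n])) \<longrightarrow> range x \<notin> \<B>)"

definition alice_has_winning :: "'b set set \<Rightarrow> 'b set set \<Rightarrow> bool" where
  "alice_has_winning \<A> \<B> \<longleftrightarrow> (\<exists>\<sigma>. alice_wins_with \<A> \<B> \<sigma>)"

definition bob_strategy :: "'b set set \<Rightarrow> ('b set list \<Rightarrow> 'b) \<Rightarrow> bool" where
  "bob_strategy \<A> \<tau> \<longleftrightarrow> (\<forall>As. As \<noteq> [] \<and> set As \<subseteq> \<A> \<longrightarrow> \<tau> As \<in> last As)"

definition bob_wins_with :: "'b set set \<Rightarrow> 'b set set \<Rightarrow> ('b set list \<Rightarrow> 'b) \<Rightarrow> bool" where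
  "bob_wins_with \<A> \<B> \<tau> \<longleftrightarrow> bob_strategy \<A> \<tau> \<and>
     (\<forall>A :: nat \<Rightarrow> 'b set. (\<forall>n. A n \<in> \<A>) \<longrightarrow> range (\<lambda>n. \<tau> (map A [0..<Suc n])) \<in> \<B>)"

definition bob_has_winning :: "'b set set \<Rightarrow> 'b set set \<Rightarrow> bool" where
  "bob_has_winning \<A> \<B> \<longleftrightarrow> (\<exists>\<tau>. bob_wins_with \<A> \<B> \<tau>)"

definition alice_has_winning_predetermined :: "'b set set \<Rightarrow> 'b set set \<Rightarrow> bool" where
  "alice_has_winning_predetermined \<A> \<B> \<longleftrightarrow>
     (\<exists>\<sigma> :: nat \<Rightarrow> 'b set. (\<forall>n. \<sigma> n \<in> \<A>) \<and>
        (\<forall>x :: nat \<Rightarrow> 'b. (\<forall>n. x n \<in> \<sigma> n) \<longrightarrow> range x \<notin> \<B>))"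

definition bob_has_winning_markov :: "'b set set \<Rightarrow> 'b set set \<Rightarrow> bool" where
  "bob_has_winning_markov \<A> \<B> \<longleftrightarrow>
     (\<exists>\<tau> :: 'b set \<Rightarrow> nat \<Rightarrow> 'b. (\<forall>A n. A \<in> \<A> \<longrightarrow> \<tau> A n \<in> A) \<and>
        (\<forall>A :: nat \<Rightarrow> 'b set. (\<forall>n. A n \<in> \<A>) \<longrightarrow> range (\<lambda>n. \<tau> (A n) n) \<in> \<B>))"

definition clopen_in :: "'a topology \<Rightarrow> 'a set \<Rightarrow> bool" where
  "clopen_in X U \<longleftrightarrow> openin X U \<and> closedin X U"

definition clopen_covers :: "'a topology \<Rightarrow> 'a set set set" where
  "clopen_covers X = {\<U>. (\<forall>U\<in>\<U>. clopen_in X U) \<and> \<Union>\<U> = topspace X}"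

definition clopen_nbhds :: "'a topology \<Rightarrow> 'a \<Rightarrow> 'a set set" where
  "clopen_nbhds X x = {U. clopen_in X U \<and> U \<noteq> {} \<and> x \<in> U}"

definition clopen_nbhd_systems :: "'a topology \<Rightarrow> 'a set set set" where
  "clopen_nbhd_systems X = {clopen_nbhds X x | x. x \<in> topspace X}"

end

theory Submission
  imports Defs
begin

fun hist :: "('s list \<Rightarrow> 'm \<Rightarrow> 's) \<Rightarrow> 'm list \<Rightarrow> 's list" where
  "hist f [] = []"
| "hist f (m # ms) = hist f ms @ [f (hist f ms) m]"

lemma hist_Suc: "hist f (rev (map A [0..<Suc n])) =
   hist f (rev (map A [0..<n])) @ [f (hist f (rev (map A [0..<n]))) (A n)]"
  by simp

lemma hist_map: "hist f (rev (map A [0..<n])) =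
   map (\<lambda>i. f (hist f (rev (map A [0..<i]))) (A i)) [0..<n]"
  by (induction n) auto

lemma hist_set: "(\<And>h m. set h \<subseteq> S \<Longrightarrow> m \<in> M \<Longrightarrow> f h m \<in> S) \<Longrightarrow> set ms \<subseteq> M \<Longrightarrow> set (hist f ms) \<subseteq> S"
  by (induction ms) auto

lemma hist_last: "As \<noteq> [] \<Longrightarrow> last (hist f (rev As)) = f (hist f (rev (butlast As))) (last As)"
  by (cases As rule: rev_cases) auto

lemma clopen_sub: "clopen_in X U \<Longrightarrow> U \<subseteq> topspace X"
  by (simp add: clopen_in_def openin_subset)

lemma Union_CO: "\<Union>(clopen_covers X) = {U. clopen_in X U}"
proof
  show "\<Union>(clopen_covers X) \<subseteq> {U. clopen_in X U}" by (auto simp: clopen_covers_def)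
  show "{U. clopen_in X U} \<subseteq> \<Union>(clopen_covers X)"
  proof
    fix U assume U: "U \<in> {U. clopen_in X U}"
    have "{U, topspace X} \<in> clopen_covers X"
      using U clopen_sub[of X U] by (auto simp: clopen_covers_def clopen_in_def)
    then show "U \<in> \<Union>(clopen_covers X)" by blast
  qed
qed

lemma CX_elem: "A \<in> clopen_nbhd_systems X \<longleftrightarrow> (\<exists>x\<in>topspace X. A = clopen_nbhds X x)"
  by (auto simp: clopen_nbhd_systems_def)

lemma Union_CX: "\<Union>(clopen_nbhd_systems X) = {U. clopen_in X U \<and> U \<noteq> {}}"
proof
  show "\<Union>(clopen_nbhd_systems X) \<subseteq> {U. clopen_in X U \<and> U \<noteq> {}}"
    by (auto simp: clopen_nbhd_systems_def clopen_nbhds_def)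
  show "{U. clopen_in X U \<and> U \<noteq> {}} \<subseteq> \<Union>(clopen_nbhd_systems X)"
  proof
    fix U assume U: "U \<in> {U. clopen_in X U \<and> U \<noteq> {}}"
    then obtain x where x: "x \<in> U" by auto
    then have "x \<in> topspace X" using U clopen_sub[of X U] by auto
    moreover have "U \<in> clopen_nbhds X x" using U x by (auto simp: clopen_nbhds_def)
    ultimately show "U \<in> \<Union>(clopen_nbhd_systems X)" by (auto simp: clopen_nbhd_systems_def)
  qed
qed

lemma nbhd_in_UCX: "x \<in> topspace X \<Longrightarrow> V \<in> clopen_nbhds X x \<Longrightarrow> V \<in> \<Union>(clopen_nbhd_systems X)"
  by (auto simp: clopen_nbhd_systems_def)

lemma cover_meets: "\<U> \<in> clopen_covers X \<Longrightarrow> x \<in> topspace X \<Longrightarrow> \<exists>V\<in>\<U>. V \<in> clopen_nbhds X x"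
proof -
  assume a: "\<U> \<in> clopen_covers X" "x \<in> topspace X"
  then obtain V where "V \<in> \<U>" "x \<in> V" by (auto simp: clopen_covers_def)
  then show ?thesis using a by (auto simp: clopen_covers_def clopen_nbhds_def)
qed

lemma mk_cover: "(\<forall>V\<in>S. clopen_in X V) \<Longrightarrow> (\<forall>x\<in>topspace X. \<exists>V\<in>S. x \<in> V) \<Longrightarrow> S \<in> clopen_covers X"
  unfolding clopen_covers_def using clopen_sub by fastforce

lemma neg_iff: "S \<subseteq> \<Union>(clopen_nbhd_systems X) \<Longrightarrow>
   S \<in> neg_game (clopen_nbhd_systems X) (clopen_covers X) \<longleftrightarrow> S \<notin> clopen_covers X"
  by (auto simp: neg_game_def)

lemma bob_point:
  assumes g: "\<forall>\<U>\<in>clopen_covers X. g \<U> \<in> \<U>"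
  shows "\<exists>p\<in>topspace X. \<forall>V\<in>clopen_nbhds X p. \<exists>\<U>\<in>clopen_covers X. g \<U> = V"
proof (rule ccontr)
  assume "\<not> ?thesis"
  then have "\<forall>p\<in>topspace X. \<exists>V. V\<in>clopen_nbhds X p \<and> (\<forall>\<U>\<in>clopen_covers X. g \<U> \<noteq> V)" by blast
  then obtain W where W: "\<forall>p\<in>topspace X. W p \<in> clopen_nbhds X p \<and> (\<forall>\<U>\<in>clopen_covers X. g \<U> \<noteq> W p)"
    by metis
  have "W ` topspace X \<in> clopen_covers X"
    by (rule mk_cover) (use W in \<open>auto simp: clopen_nbhds_def\<close>)
  then have "g (W ` topspace X) \<in> W ` topspace X" using g by blast
  then show False using W \<open>W ` topspace X \<in> clopen_covers X\<close> by blast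
qed


lemma dir1:
  assumes "alice_has_winning (clopen_covers X) (clopen_covers X)"
  shows "bob_has_winning (clopen_nbhd_systems X) (neg_game (clopen_nbhd_systems X) (clopen_covers X))"
proof -
  let ?CO = "clopen_covers X" and ?CX = "clopen_nbhd_systems X"
  obtain \<sigma> where \<sigma>: "alice_wins_with ?CO ?CO \<sigma>"
    using assms by (auto simp: alice_has_winning_def)
  have \<sigma>s: "set h \<subseteq> \<Union>?CO \<Longrightarrow> \<sigma> h \<in> ?CO" for h
    using \<sigma> by (auto simp: alice_wins_with_def alice_strategy_def)
  define f where "f h A = (SOME V. V \<in> \<sigma> h \<and> V \<in> A)" for h A
  have step: "f h A \<in> \<sigma> h \<and> f h A \<in> A" if hA: "set h \<subseteq> \<Union>?CO" "A \<in> ?CX" for h A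
  proof -
    obtain x where x: "x \<in> topspace X" "A = clopen_nbhds X x" using hA(2) CX_elem by metis
    obtain V where "V \<in> \<sigma> h" "V \<in> A" using cover_meets[OF \<sigma>s[OF hA(1)] x(1)] x(2) by blast
    then show ?thesis unfolding f_def by (rule someI[where x=V, OF conjI])
  qed
  have inv: "set As \<subseteq> ?CX \<Longrightarrow> set (hist f As) \<subseteq> \<Union>?CO" for As
    by (rule hist_set[where M="?CX"]) (use step \<sigma>s in blast)+
  define \<tau> where "\<tau> As = last (hist f (rev As))" for As
  have strat: "bob_strategy ?CX \<tau>"
    unfolding bob_strategy_def
  proof (intro allI impI)
    fix As assume As: "As \<noteq> [] \<and> set As \<subseteq> ?CX"
    then have "set (rev (butlast As)) \<subseteq> ?CX" by (auto dest: in_set_butlastD)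
    from inv[OF this] have "set (hist f (rev (butlast As))) \<subseteq> \<Union>?CO" .
    moreover have "last As \<in> ?CX" using As by auto
    ultimately show "\<tau> As \<in> last As" using step As unfolding \<tau>_def by (simp add: hist_last)
  qed
  have win: "range (\<lambda>n. \<tau> (map A [0..<Suc n])) \<in> neg_game ?CX ?CO" if A: "\<forall>n. A n \<in> ?CX" for A
  proof -
    define hs where "hs n = hist f (rev (map A [0..<n]))" for n
    define V where "V n = f (hs n) (A n)" for n
    have hsV: "hs n = map V [0..<n]" for n unfolding hs_def V_def by (subst hist_map) (simp add: hs_def)
    have tV: "\<tau> (map A [0..<Suc n]) = V n" for n unfolding \<tau>_def V_def hs_def by (simp only: hist_Suc) simp
    have hsU: "set (hs n) \<subseteq> \<Union>?CO" for n unfolding hs_def by (rule inv) (use A in auto)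
    have Vs: "V n \<in> \<sigma> (map V [0..<n]) \<and> V n \<in> A n" for n
      using step[OF hsU A[rule_format]] hsV unfolding V_def by metis
    have "range V \<notin> ?CO" using \<sigma> Vs by (auto simp: alice_wins_with_def)
    moreover have "range V \<subseteq> \<Union>?CX" using Vs A by blast
    ultimately show ?thesis using tV neg_iff by (metis (no_types, lifting) image_cong)
  qed
  show ?thesis unfolding bob_has_winning_def bob_wins_with_def using strat win by blast
qed


lemma dir2:
  assumes "bob_has_winning (clopen_nbhd_systems X) (neg_game (clopen_nbhd_systems X) (clopen_covers X))"
  shows "alice_has_winning (clopen_covers X) (clopen_covers X)"
proof -
  let ?CO = "clopen_covers X" and ?CX = "clopen_nbhd_systems X"
  obtain \<tau> where \<tau>: "bob_wins_with ?CX (neg_game ?CX ?CO) \<tau>"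
    using assms by (auto simp: bob_has_winning_def)
  have \<tau>s: "set h \<subseteq> ?CX \<Longrightarrow> A \<in> ?CX \<Longrightarrow> \<tau> (h @ [A]) \<in> A" for h A
  proof -
    assume "set h \<subseteq> ?CX" "A \<in> ?CX"
    then have "h @ [A] \<noteq> [] \<and> set (h @ [A]) \<subseteq> ?CX" by auto
    then have "\<tau> (h @ [A]) \<in> last (h @ [A])"
      using \<tau> unfolding bob_wins_with_def bob_strategy_def by blast
    then show ?thesis by simp
  qed
  define f where "f h U = (if \<exists>A\<in>?CX. \<tau> (h @ [A]) = U then SOME A. A \<in> ?CX \<and> \<tau> (h @ [A]) = U
      else SOME A. A \<in> ?CX)" for h U
  have fCX: "?CX \<noteq> {} \<Longrightarrow> f h U \<in> ?CX" for h U
  proof -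
    assume ne: "?CX \<noteq> {}"
    show ?thesis
    proof (cases "\<exists>A\<in>?CX. \<tau> (h @ [A]) = U")
      case True then have "\<exists>A. A \<in> ?CX \<and> \<tau> (h @ [A]) = U" by blast
      from someI_ex[OF this] show ?thesis using True unfolding f_def by simp
    next
      case False from ne have "\<exists>A. A \<in> ?CX" by blast
      from someI_ex[OF this] show ?thesis using False unfolding f_def by simp
    qed
  qed
  have fgood: "\<exists>A\<in>?CX. \<tau> (h @ [A]) = U \<Longrightarrow> f h U \<in> ?CX \<and> \<tau> (h @ [f h U]) = U" for h U
  proof -
    assume True: "\<exists>A\<in>?CX. \<tau> (h @ [A]) = U"
    then have "\<exists>A. A \<in> ?CX \<and> \<tau> (h @ [A]) = U" by blast
    from someI_ex[OF this] show ?thesis using True unfolding f_def by simp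
  qed
  have inv: "?CX \<noteq> {} \<Longrightarrow> set (hist f ms) \<subseteq> ?CX" for ms
    by (rule hist_set[where M=UNIV]) (use fCX in auto)
  define \<sigma> where "\<sigma> s = (\<lambda>A. \<tau> (hist f (rev s) @ [A])) ` ?CX" for s
  have strat: "alice_strategy ?CO \<sigma>"
    unfolding alice_strategy_def
  proof (intro allI impI)
    fix s :: "'a set list"
    show "\<sigma> s \<in> ?CO"
    proof (rule mk_cover)
      show "\<forall>V\<in>\<sigma> s. clopen_in X V"
      proof
        fix V assume "V \<in> \<sigma> s"
        then obtain A where A: "A \<in> ?CX" "V = \<tau> (hist f (rev s) @ [A])" unfolding \<sigma>_def by blast
        then have "V \<in> A" using \<tau>s inv by blast
        then show "clopen_in X V" using A(1) by (auto simp: clopen_nbhd_systems_def clopen_nbhds_def)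
      qed
      show "\<forall>x\<in>topspace X. \<exists>V\<in>\<sigma> s. x \<in> V"
      proof
        fix x assume x: "x \<in> topspace X"
        then have A: "clopen_nbhds X x \<in> ?CX" by (auto simp: clopen_nbhd_systems_def)
        then have "\<tau> (hist f (rev s) @ [clopen_nbhds X x]) \<in> clopen_nbhds X x" using \<tau>s inv by blast
        then show "\<exists>V\<in>\<sigma> s. x \<in> V" using A unfolding \<sigma>_def by (auto simp: clopen_nbhds_def)
      qed
    qed
  qed
  have win: "range x \<notin> ?CO" if x: "\<forall>n. x n \<in> \<sigma> (map x [0..<n])" for x
  proof -
    define hs where "hs n = hist f (rev (map x [0..<n]))" for n
    define A where "A n = f (hs n) (x n)" for n
    have hsA: "hs n = map A [0..<n]" for n unfolding hs_def A_def by (subst hist_map) (simp add: hs_def)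
    have good: "A n \<in> ?CX \<and> \<tau> (hs n @ [A n]) = x n" for n
    proof -
      obtain B where "B \<in> ?CX" "x n = \<tau> (hist f (rev (map x [0..<n])) @ [B])"
        using x[rule_format, of n] unfolding \<sigma>_def by blast
      then have "\<exists>B\<in>?CX. \<tau> (hs n @ [B]) = x n" unfolding hs_def by metis
      from fgood[OF this] show ?thesis unfolding A_def .
    qed
    have "\<tau> (map A [0..<Suc n]) = x n" for n using good[of n] hsA[of n] by simp
    then have "range (\<lambda>n. \<tau> (map A [0..<Suc n])) = range x" by simp
    moreover have "range (\<lambda>n. \<tau> (map A [0..<Suc n])) \<in> neg_game ?CX ?CO"
      using \<tau> good unfolding bob_wins_with_def by blast
    ultimately show ?thesis by (simp add: neg_game_def)
  qed
  show ?thesis unfolding alice_has_winning_def alice_wins_with_def using strat win by blast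
qed


lemma dir3:
  assumes "alice_has_winning (clopen_nbhd_systems X) (neg_game (clopen_nbhd_systems X) (clopen_covers X))"
  shows "bob_has_winning (clopen_covers X) (clopen_covers X)"
proof -
  let ?CO = "clopen_covers X" and ?CX = "clopen_nbhd_systems X"
  obtain \<sigma> where \<sigma>: "alice_wins_with ?CX (neg_game ?CX ?CO) \<sigma>"
    using assms by (auto simp: alice_has_winning_def)
  have \<sigma>s: "set h \<subseteq> \<Union>?CX \<Longrightarrow> \<sigma> h \<in> ?CX" for h
    using \<sigma> by (auto simp: alice_wins_with_def alice_strategy_def)
  define f where "f h U = (SOME V. V \<in> U \<and> V \<in> \<sigma> h)" for h U
  have step: "f h U \<in> U \<and> f h U \<in> \<sigma> h \<and> f h U \<in> \<Union>?CX" if hU: "set h \<subseteq> \<Union>?CX" "U \<in> ?CO" for h U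
  proof -
    obtain x where x: "x \<in> topspace X" "\<sigma> h = clopen_nbhds X x" using \<sigma>s[OF hU(1)] CX_elem by metis
    obtain V where "V \<in> U" "V \<in> \<sigma> h" using cover_meets[OF hU(2) x(1)] x(2) by blast
    then have "f h U \<in> U \<and> f h U \<in> \<sigma> h" unfolding f_def by (rule someI[where x=V, OF conjI])
    then show ?thesis using \<sigma>s[OF hU(1)] by blast
  qed
  have inv: "set As \<subseteq> ?CO \<Longrightarrow> set (hist f As) \<subseteq> \<Union>?CX" for As
    by (rule hist_set[where M="?CO"]) (use step in blast)+
  define \<tau> where "\<tau> As = last (hist f (rev As))" for As
  have strat: "bob_strategy ?CO \<tau>"
    unfolding bob_strategy_def
  proof (intro allI impI)
    fix As assume As: "As \<noteq> [] \<and> set As \<subseteq> ?CO"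
    then have "set (rev (butlast As)) \<subseteq> ?CO" by (auto dest: in_set_butlastD)
    from inv[OF this] have "set (hist f (rev (butlast As))) \<subseteq> \<Union>?CX" .
    moreover have "last As \<in> ?CO" using As by auto
    ultimately show "\<tau> As \<in> last As" using step As unfolding \<tau>_def by (simp add: hist_last)
  qed
  have win: "range (\<lambda>n. \<tau> (map A [0..<Suc n])) \<in> ?CO" if A: "\<forall>n. A n \<in> ?CO" for A
  proof -
    define hs where "hs n = hist f (rev (map A [0..<n]))" for n
    define V where "V n = f (hs n) (A n)" for n
    have hsV: "hs n = map V [0..<n]" for n unfolding hs_def V_def by (subst hist_map) (simp add: hs_def)
    have tV: "\<tau> (map A [0..<Suc n]) = V n" for n unfolding \<tau>_def V_def hs_def by (simp only: hist_Suc) simp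
    have hsU: "set (hs n) \<subseteq> \<Union>?CX" for n unfolding hs_def by (rule inv) (use A in auto)
    have Vs: "V n \<in> \<sigma> (map V [0..<n]) \<and> V n \<in> \<Union>?CX" for n
      using step[OF hsU A[rule_format]] hsV unfolding V_def by metis
    have "range V \<notin> neg_game ?CX ?CO" using \<sigma> Vs by (auto simp: alice_wins_with_def)
    moreover have "range V \<subseteq> \<Union>?CX" using Vs by blast
    ultimately have "range V \<in> ?CO" using neg_iff by blast
    moreover have "range (\<lambda>n. \<tau> (map A [0..<Suc n])) = range V" using tV by simp
    ultimately show ?thesis by simp
  qed
  show ?thesis unfolding bob_has_winning_def bob_wins_with_def using strat win by blast
qed

lemma dir4:
  assumes "bob_has_winning (clopen_covers X) (clopen_covers X)"
  shows "alice_has_winning (clopen_nbhd_systems X) (neg_game (clopen_nbhd_systems X) (clopen_covers X))"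
proof -
  let ?CO = "clopen_covers X" and ?CX = "clopen_nbhd_systems X"
  obtain \<tau> where \<tau>: "bob_wins_with ?CO ?CO \<tau>"
    using assms by (auto simp: bob_has_winning_def)
  have \<tau>s: "set h \<subseteq> ?CO \<Longrightarrow> U \<in> ?CO \<Longrightarrow> \<tau> (h @ [U]) \<in> U" for h U
  proof -
    assume "set h \<subseteq> ?CO" "U \<in> ?CO"
    then have "h @ [U] \<noteq> [] \<and> set (h @ [U]) \<subseteq> ?CO" by auto
    then have "\<tau> (h @ [U]) \<in> last (h @ [U])"
      using \<tau> unfolding bob_wins_with_def bob_strategy_def by blast
    then show ?thesis by simp
  qed
  have topC: "{topspace X} \<in> ?CO" by (auto simp: clopen_covers_def clopen_in_def)
  define f where "f h V = (if \<exists>U\<in>?CO. \<tau> (h @ [U]) = V then SOME U. U \<in> ?CO \<and> \<tau> (h @ [U]) = V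
      else {topspace X})" for h V
  have fCO: "f h V \<in> ?CO" for h V
  proof (cases "\<exists>U\<in>?CO. \<tau> (h @ [U]) = V")
    case True then have "\<exists>U. U \<in> ?CO \<and> \<tau> (h @ [U]) = V" by blast
    from someI_ex[OF this] show ?thesis using True unfolding f_def by simp
  next
    case False then show ?thesis using topC unfolding f_def by simp
  qed
  have fgood: "\<exists>U\<in>?CO. \<tau> (h @ [U]) = V \<Longrightarrow> \<tau> (h @ [f h V]) = V" for h V
  proof -
    assume True: "\<exists>U\<in>?CO. \<tau> (h @ [U]) = V"
    then have "\<exists>U. U \<in> ?CO \<and> \<tau> (h @ [U]) = V" by blast
    from someI_ex[OF this] show ?thesis using True unfolding f_def by simp
  qed
  have inv: "set (hist f ms) \<subseteq> ?CO" for ms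
    by (rule hist_set[where M=UNIV]) (use fCO in auto)
  define pt where "pt h = (SOME p. p \<in> topspace X \<and> (\<forall>V\<in>clopen_nbhds X p. \<exists>U\<in>?CO. \<tau> (h @ [U]) = V))" for h
  have pt: "pt h \<in> topspace X \<and> (\<forall>V\<in>clopen_nbhds X (pt h). \<exists>U\<in>?CO. \<tau> (h @ [U]) = V)"
    if "set h \<subseteq> ?CO" for h
  proof -
    have "\<exists>p\<in>topspace X. \<forall>V\<in>clopen_nbhds X p. \<exists>U\<in>?CO. \<tau> (h @ [U]) = V"
      by (rule bob_point) (use \<tau>s that in blast)
    then have "\<exists>p. p \<in> topspace X \<and> (\<forall>V\<in>clopen_nbhds X p. \<exists>U\<in>?CO. \<tau> (h @ [U]) = V)" by blast
    from someI_ex[OF this] show ?thesis unfolding pt_def .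
  qed
  define \<sigma> where "\<sigma> s = clopen_nbhds X (pt (hist f (rev s)))" for s
  have strat: "alice_strategy ?CX \<sigma>"
    unfolding alice_strategy_def \<sigma>_def
  proof (intro allI impI)
    fix s :: "'a set list"
    have "pt (hist f (rev s)) \<in> topspace X" using pt[OF inv[of "rev s"]] by blast
    then show "clopen_nbhds X (pt (hist f (rev s))) \<in> ?CX" by (auto simp: clopen_nbhd_systems_def)
  qed
  have win: "range x \<notin> neg_game ?CX ?CO" if x: "\<forall>n. x n \<in> \<sigma> (map x [0..<n])" for x
  proof -
    define hs where "hs n = hist f (rev (map x [0..<n]))" for n
    define U where "U n = f (hs n) (x n)" for n
    have hsU: "hs n = map U [0..<n]" for n unfolding hs_def U_def by (subst hist_map) (simp add: hs_def)
    have good: "\<tau> (hs n @ [U n]) = x n" for n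
    proof -
      have "x n \<in> clopen_nbhds X (pt (hs n))" using x[rule_format, of n] unfolding \<sigma>_def hs_def .
      then have "\<exists>B\<in>?CO. \<tau> (hs n @ [B]) = x n" using pt[OF inv[of "rev (map x [0..<n])"]] unfolding hs_def by blast
      from fgood[OF this] show ?thesis unfolding U_def .
    qed
    have "\<tau> (map U [0..<Suc n]) = x n" for n using good[of n] hsU[of n] by simp
    then have "range (\<lambda>n. \<tau> (map U [0..<Suc n])) = range x" by simp
    moreover have "\<forall>n. U n \<in> ?CO" unfolding U_def using fCO by blast
    then have "range (\<lambda>n. \<tau> (map U [0..<Suc n])) \<in> ?CO"
      using \<tau> unfolding bob_wins_with_def by blast
    ultimately show ?thesis by (simp add: neg_game_def)
  qed
  show ?thesis unfolding alice_has_winning_def alice_wins_with_def using strat win by blast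
qed


lemma dir5:
  fixes X :: "'a topology"
  assumes "alice_has_winning_predetermined (clopen_covers X) (clopen_covers X)"
  shows "bob_has_winning_markov (clopen_nbhd_systems X) (neg_game (clopen_nbhd_systems X) (clopen_covers X))"
proof -
  let ?CO = "clopen_covers X" and ?CX = "clopen_nbhd_systems X"
  obtain \<sigma> :: "nat \<Rightarrow> 'a set set" where \<sigma>: "\<forall>n. \<sigma> n \<in> ?CO" "\<forall>x. (\<forall>n. x n \<in> \<sigma> n) \<longrightarrow> range x \<notin> ?CO"
    using assms by (auto simp: alice_has_winning_predetermined_def)
  define \<tau> where "\<tau> A n = (SOME V. V \<in> \<sigma> n \<and> V \<in> A)" for A n
  have step: "\<tau> A n \<in> \<sigma> n \<and> \<tau> A n \<in> A" if A: "A \<in> ?CX" for A n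
  proof -
    obtain x where x: "x \<in> topspace X" "A = clopen_nbhds X x" using A CX_elem by metis
    obtain V where "V \<in> \<sigma> n" "V \<in> A" using cover_meets[OF \<sigma>(1)[rule_format] x(1)] x(2) by blast
    then show ?thesis unfolding \<tau>_def by (rule someI[where x=V, OF conjI])
  qed
  have win: "range (\<lambda>n. \<tau> (A n) n) \<in> neg_game ?CX ?CO" if A: "\<forall>n. A n \<in> ?CX" for A
  proof -
    have "\<forall>n. \<tau> (A n) n \<in> \<sigma> n" using step A by blast
    then have "range (\<lambda>n. \<tau> (A n) n) \<notin> ?CO" using \<sigma>(2)[rule_format, of "\<lambda>n. \<tau> (A n) n"] by blast
    moreover have "range (\<lambda>n. \<tau> (A n) n) \<subseteq> \<Union>?CX" using step A by blast
    ultimately show ?thesis using neg_iff by blast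
  qed
  show ?thesis unfolding bob_has_winning_markov_def
    by (rule exI[of _ \<tau>]) (use step win in blast)
qed

lemma dir6:
  fixes X :: "'a topology"
  assumes "bob_has_winning_markov (clopen_nbhd_systems X) (neg_game (clopen_nbhd_systems X) (clopen_covers X))"
  shows "alice_has_winning_predetermined (clopen_covers X) (clopen_covers X)"
proof -
  let ?CO = "clopen_covers X" and ?CX = "clopen_nbhd_systems X"
  obtain \<tau> :: "'a set set \<Rightarrow> nat \<Rightarrow> 'a set" where \<tau>: "\<forall>A n. A \<in> ?CX \<longrightarrow> \<tau> A n \<in> A"
     "\<forall>A. (\<forall>n. A n \<in> ?CX) \<longrightarrow> range (\<lambda>n. \<tau> (A n) n) \<in> neg_game ?CX ?CO"
    using assms by (auto simp: bob_has_winning_markov_def)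
  define \<sigma> where "\<sigma> n = (\<lambda>A. \<tau> A n) ` ?CX" for n
  have cov: "\<sigma> n \<in> ?CO" for n
  proof (rule mk_cover)
    show "\<forall>V\<in>\<sigma> n. clopen_in X V"
    proof
      fix V assume "V \<in> \<sigma> n"
      then obtain A where A: "A \<in> ?CX" "V = \<tau> A n" unfolding \<sigma>_def by blast
      then have "V \<in> A" using \<tau>(1) by blast
      then show "clopen_in X V" using A(1) by (auto simp: clopen_nbhd_systems_def clopen_nbhds_def)
    qed
    show "\<forall>x\<in>topspace X. \<exists>V\<in>\<sigma> n. x \<in> V"
    proof
      fix x assume x: "x \<in> topspace X"
      then have A: "clopen_nbhds X x \<in> ?CX" by (auto simp: clopen_nbhd_systems_def)
      then have "\<tau> (clopen_nbhds X x) n \<in> clopen_nbhds X x" using \<tau>(1) by blast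
      then show "\<exists>V\<in>\<sigma> n. x \<in> V" using A unfolding \<sigma>_def by (auto simp: clopen_nbhds_def)
    qed
  qed
  have win: "range x \<notin> ?CO" if x: "\<forall>n. x n \<in> \<sigma> n" for x
  proof -
    have "\<forall>n. \<exists>A. A \<in> ?CX \<and> \<tau> A n = x n"
    proof
      fix n
      from x have "x n \<in> (\<lambda>A. \<tau> A n) ` ?CX" unfolding \<sigma>_def by blast
      then show "\<exists>A. A \<in> ?CX \<and> \<tau> A n = x n" by (auto simp del: clopen_nbhd_systems_def)
    qed
    then have "\<exists>A. \<forall>n. A n \<in> ?CX \<and> \<tau> (A n) n = x n" by (rule choice)
    then obtain A where A: "\<forall>n. A n \<in> ?CX \<and> \<tau> (A n) n = x n" by blast
    then have "range (\<lambda>n. \<tau> (A n) n) \<in> neg_game ?CX ?CO" using \<tau>(2)[rule_format, of A] by blast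
    moreover have "range (\<lambda>n. \<tau> (A n) n) = range x" using A by simp
    ultimately show ?thesis by (simp add: neg_game_def)
  qed
  show ?thesis unfolding alice_has_winning_predetermined_def
    by (rule exI[of _ \<sigma>]) (use cov win in blast)
qed

lemma dir7:
  fixes X :: "'a topology"
  assumes "alice_has_winning_predetermined (clopen_nbhd_systems X) (neg_game (clopen_nbhd_systems X) (clopen_covers X))"
  shows "bob_has_winning_markov (clopen_covers X) (clopen_covers X)"
proof -
  let ?CO = "clopen_covers X" and ?CX = "clopen_nbhd_systems X"
  obtain \<sigma> :: "nat \<Rightarrow> 'a set set" where \<sigma>: "\<forall>n. \<sigma> n \<in> ?CX" "\<forall>x. (\<forall>n. x n \<in> \<sigma> n) \<longrightarrow> range x \<notin> neg_game ?CX ?CO"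
    using assms by (auto simp: alice_has_winning_predetermined_def)
  define \<tau> where "\<tau> U n = (SOME V. V \<in> U \<and> V \<in> \<sigma> n)" for U n
  have step: "\<tau> U n \<in> U \<and> \<tau> U n \<in> \<sigma> n" if U: "U \<in> ?CO" for U n
  proof -
    obtain x where x: "x \<in> topspace X" "\<sigma> n = clopen_nbhds X x" using \<sigma>(1) CX_elem by metis
    obtain V where "V \<in> U" "V \<in> \<sigma> n" using cover_meets[OF U x(1)] x(2) by blast
    then show ?thesis unfolding \<tau>_def by (rule someI[where x=V, OF conjI])
  qed
  have win: "range (\<lambda>n. \<tau> (U n) n) \<in> ?CO" if U: "\<forall>n. U n \<in> ?CO" for U
  proof -
    have "\<forall>n. \<tau> (U n) n \<in> \<sigma> n" using step U by blast
    then have "range (\<lambda>n. \<tau> (U n) n) \<notin> neg_game ?CX ?CO" using \<sigma>(2)[rule_format, of "\<lambda>n. \<tau> (U n) n"] by blast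
    moreover have "range (\<lambda>n. \<tau> (U n) n) \<subseteq> \<Union>?CX" using step U \<sigma>(1) by blast
    ultimately show ?thesis using neg_iff by blast
  qed
  show ?thesis unfolding bob_has_winning_markov_def
    by (rule exI[of _ \<tau>]) (use step win in blast)
qed

lemma dir8:
  fixes X :: "'a topology"
  assumes "bob_has_winning_markov (clopen_covers X) (clopen_covers X)"
  shows "alice_has_winning_predetermined (clopen_nbhd_systems X) (neg_game (clopen_nbhd_systems X) (clopen_covers X))"
proof -
  let ?CO = "clopen_covers X" and ?CX = "clopen_nbhd_systems X"
  obtain \<tau> :: "'a set set \<Rightarrow> nat \<Rightarrow> 'a set" where \<tau>: "\<forall>U n. U \<in> ?CO \<longrightarrow> \<tau> U n \<in> U"
     "\<forall>U. (\<forall>n. U n \<in> ?CO) \<longrightarrow> range (\<lambda>n. \<tau> (U n) n) \<in> ?CO"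
    using assms by (auto simp: bob_has_winning_markov_def)
  have "\<forall>n. \<exists>p. p \<in> topspace X \<and> (\<forall>V\<in>clopen_nbhds X p. \<exists>U\<in>?CO. \<tau> U n = V)"
  proof
    fix n
    have "\<exists>p\<in>topspace X. \<forall>V\<in>clopen_nbhds X p. \<exists>U\<in>?CO. \<tau> U n = V"
      by (rule bob_point) (use \<tau>(1) in blast)
    then show "\<exists>p. p \<in> topspace X \<and> (\<forall>V\<in>clopen_nbhds X p. \<exists>U\<in>?CO. \<tau> U n = V)" by blast
  qed
  then have "\<exists>p. \<forall>n. p n \<in> topspace X \<and> (\<forall>V\<in>clopen_nbhds X (p n). \<exists>U\<in>?CO. \<tau> U n = V)"
    by (rule choice)
  then obtain p where p: "\<forall>n. p n \<in> topspace X \<and> (\<forall>V\<in>clopen_nbhds X (p n). \<exists>U\<in>?CO. \<tau> U n = V)"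
    by blast
  define \<sigma> where "\<sigma> n = clopen_nbhds X (p n)" for n
  have mv: "\<forall>n. \<sigma> n \<in> ?CX" using p unfolding \<sigma>_def by (auto simp: clopen_nbhd_systems_def)
  have win: "range x \<notin> neg_game ?CX ?CO" if x: "\<forall>n. x n \<in> \<sigma> n" for x
  proof -
    have "\<forall>n. \<exists>U. U \<in> ?CO \<and> \<tau> U n = x n"
    proof
      fix n
      have "x n \<in> clopen_nbhds X (p n)" using x unfolding \<sigma>_def by blast
      then show "\<exists>U. U \<in> ?CO \<and> \<tau> U n = x n" using p by blast
    qed
    then have "\<exists>U. \<forall>n. U n \<in> ?CO \<and> \<tau> (U n) n = x n" by (rule choice)
    then obtain U where U: "\<forall>n. U n \<in> ?CO \<and> \<tau> (U n) n = x n" by blast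
    then have "range (\<lambda>n. \<tau> (U n) n) \<in> ?CO" using \<tau>(2)[rule_format, of U] by blast
    moreover have "range (\<lambda>n. \<tau> (U n) n) = range x" using U by simp
    ultimately show ?thesis by (simp add: neg_game_def)
  qed
  show ?thesis unfolding alice_has_winning_predetermined_def
    by (rule exI[of _ \<sigma>]) (use mv win in blast)
qed

theorem corollary3p6:
  fixes X :: "'a topology"
  shows "(alice_has_winning (clopen_covers X) (clopen_covers X) \<longleftrightarrow>
            bob_has_winning (clopen_nbhd_systems X) (neg_game (clopen_nbhd_systems X) (clopen_covers X)))
       \<and> (alice_has_winning (clopen_nbhd_systems X) (neg_game (clopen_nbhd_systems X) (clopen_covers X)) \<longleftrightarrow>
            bob_has_winning (clopen_covers X) (clopen_covers X))
       \<and> (alice_has_winning_predetermined (clopen_covers X) (clopen_covers X) \<longleftrightarrow>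
            bob_has_winning_markov (clopen_nbhd_systems X) (neg_game (clopen_nbhd_systems X) (clopen_covers X)))
       \<and> (alice_has_winning_predetermined (clopen_nbhd_systems X) (neg_game (clopen_nbhd_systems X) (clopen_covers X)) \<longleftrightarrow>
            bob_has_winning_markov (clopen_covers X) (clopen_covers X))"
  by (intro conjI iffI) (erule dir1 | erule dir2 | erule dir3 | erule dir4 | erule dir5 | erule dir6 | erule dir7 | erule dir8)+

end
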